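(* Let $S$ be an $E$-solid locally inverse semigroup, $\rho$ an inverse semigroup congruence on $S$ whose idempotent classes are completely simple subsemigroups, $T=S/\rho$, and let $\mathcal C$ be the derived semigroupoid. Let $(\alpha,s,\beta)\in T\times S\times T$. (1) $(\alpha,s,\beta)$ is an arrow of $\mathcal C$ if and only if $\alpha\,\mathcal R\,\beta$ in $T$ and $s\rho\ge\alpha^{-1}\beta$. (2) If $(\alpha,s,\beta)$ is an arrow of $\mathcal C$ then $s\rho(s\rho)^{-1}\ge\alpha^{-1}\alpha$ and $(s\rho)^{-1}s\rho\ge\beta^{-1}\beta$ in $T$. (3) If $(\alpha,s,\beta)$ is an arrow of $\mathcal C$ then the following are equivalent: (a) $s\rho=\alpha^{-1}\beta$; (b) $s\rho(s\rho)^{-1}=\alpha^{-1}\alpha$; (c) $(s\rho)^{-1}s\rho=\beta^{-1}\beta$.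
   Context: The derived semigroupoid $\mathcal C$ has object set $T$ and, for $\alpha,\beta\in T$, arrow set $\mathcal C(\alpha,\beta)=\{(\alpha,s,\beta)\in T\times S\times T:\alpha\cdot s\rho=\beta,\ \beta\cdot(s\rho)^{-1}=\alpha\}$, with composition $(\alpha,s,\beta)\circ(\beta,t,\gamma)=(\alpha,st,\gamma)$. The order on $T$ is the natural partial order of the inverse semigroup $T$; $\mathcal R$ is Green's relation. Locally inverse: regular with every $eSe$ inverse; $E$-solid: idempotent-generated subsemigroup completely regular. *)

theory Defs
  imports Main
begin

definition closed_on :: "'b set \<Rightarrow> ('b \<Rightarrow> 'b \<Rightarrow> 'b) \<Rightarrow> bool" where
  "closed_on A f \<longleftrightarrow> (\<forall>a\<in>A. \<forall>b\<in>A. f a b \<in> A)"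

definition is_inv :: "'b set \<Rightarrow> ('b \<Rightarrow> 'b \<Rightarrow> 'b) \<Rightarrow> 'b \<Rightarrow> 'b \<Rightarrow> bool" where
  "is_inv A f a x \<longleftrightarrow> x \<in> A \<and> f (f a x) a = a \<and> f (f x a) x = x"

definition regular_on :: "'b set \<Rightarrow> ('b \<Rightarrow> 'b \<Rightarrow> 'b) \<Rightarrow> bool" where
  "regular_on A f \<longleftrightarrow> (\<forall>a\<in>A. \<exists>x\<in>A. f (f a x) a = a)"

definition inverse_semigroup_on :: "'b set \<Rightarrow> ('b \<Rightarrow> 'b \<Rightarrow> 'b) \<Rightarrow> bool" where
  "inverse_semigroup_on A f \<longleftrightarrow> closed_on A f \<and> (\<forall>a\<in>A. \<exists>!x. is_inv A f a x)"

definition inv_on :: "'b set \<Rightarrow> ('b \<Rightarrow> 'b \<Rightarrow> 'b) \<Rightarrow> 'b \<Rightarrow> 'b" where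
  "inv_on A f a = (THE x. is_inv A f a x)"

definition nat_le :: "'b set \<Rightarrow> ('b \<Rightarrow> 'b \<Rightarrow> 'b) \<Rightarrow> 'b \<Rightarrow> 'b \<Rightarrow> bool" where
  "nat_le A f a b \<longleftrightarrow> (\<exists>e\<in>A. f e e = e \<and> a = f e b)"

text \<open>Green's R: a A^1 = b A^1.\<close>
definition greenR :: "'b set \<Rightarrow> ('b \<Rightarrow> 'b \<Rightarrow> 'b) \<Rightarrow> 'b \<Rightarrow> 'b \<Rightarrow> bool" where
  "greenR A f a b \<longleftrightarrow> (a = b \<or> (\<exists>x\<in>A. a = f b x)) \<and> (b = a \<or> (\<exists>x\<in>A. b = f a x))"

definition completely_regular_on :: "'b set \<Rightarrow> ('b \<Rightarrow> 'b \<Rightarrow> 'b) \<Rightarrow> bool" where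
  "completely_regular_on A f \<longleftrightarrow>
     (\<forall>a\<in>A. \<exists>x\<in>A. f (f a x) a = a \<and> f (f x a) x = x \<and> f a x = f x a)"

definition simple_on :: "'b set \<Rightarrow> ('b \<Rightarrow> 'b \<Rightarrow> 'b) \<Rightarrow> bool" where
  "simple_on A f \<longleftrightarrow> (\<forall>I. I \<noteq> {} \<and> I \<subseteq> A \<and> (\<forall>a\<in>A. \<forall>i\<in>I. f a i \<in> I \<and> f i a \<in> I) \<longrightarrow> I = A)"

definition primitive_idem :: "'b set \<Rightarrow> ('b \<Rightarrow> 'b \<Rightarrow> 'b) \<Rightarrow> 'b \<Rightarrow> bool" where
  "primitive_idem A f e \<longleftrightarrow> e \<in> A \<and> f e e = e \<and>
     (\<forall>g\<in>A. f g g = g \<and> f e g = g \<and> f g e = g \<longrightarrow> g = e)"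

definition completely_simple_on :: "'b set \<Rightarrow> ('b \<Rightarrow> 'b \<Rightarrow> 'b) \<Rightarrow> bool" where
  "completely_simple_on A f \<longleftrightarrow> A \<noteq> {} \<and> closed_on A f \<and> simple_on A f \<and> (\<exists>e. primitive_idem A f e)"

definition locally_inverse :: "'a::semigroup_mult itself \<Rightarrow> bool" where
  "locally_inverse _ \<longleftrightarrow> regular_on (UNIV::'a set) (*) \<and>
     (\<forall>e::'a. e * e = e \<longrightarrow> inverse_semigroup_on {e * s * e | s. True} (*))"

inductive_set idem_gen :: "'a::semigroup_mult set" where
  idem: "e * e = e \<Longrightarrow> e \<in> idem_gen"
| mult: "a \<in> idem_gen \<Longrightarrow> b \<in> idem_gen \<Longrightarrow> a * b \<in> idem_gen"

definition E_solid :: "'a::semigroup_mult itself \<Rightarrow> bool" where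
  "E_solid _ \<longleftrightarrow> completely_regular_on (idem_gen :: 'a set) (*)"

definition congruence :: "('a::semigroup_mult) rel \<Rightarrow> bool" where
  "congruence \<rho> \<longleftrightarrow> equiv UNIV \<rho> \<and>
     (\<forall>a b c. (a, b) \<in> \<rho> \<longrightarrow> (c * a, c * b) \<in> \<rho> \<and> (a * c, b * c) \<in> \<rho>)"

definition quot :: "('a::semigroup_mult) rel \<Rightarrow> 'a set set" where
  "quot \<rho> = UNIV // \<rho>"

definition cls :: "('a::semigroup_mult) rel \<Rightarrow> 'a \<Rightarrow> 'a set" where
  "cls \<rho> s = \<rho> `` {s}"

definition qmult :: "('a::semigroup_mult) rel \<Rightarrow> 'a set \<Rightarrow> 'a set \<Rightarrow> 'a set" where
  "qmult \<rho> A B = \<rho> `` {(SOME a. a \<in> A) * (SOME b. b \<in> B)}"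

definition qinv :: "('a::semigroup_mult) rel \<Rightarrow> 'a set \<Rightarrow> 'a set" where
  "qinv \<rho> A = inv_on (quot \<rho>) (qmult \<rho>) A"

definition inverse_congruence :: "('a::semigroup_mult) rel \<Rightarrow> bool" where
  "inverse_congruence \<rho> \<longleftrightarrow> congruence \<rho> \<and> inverse_semigroup_on (quot \<rho>) (qmult \<rho>)"

definition idem_classes_completely_simple :: "('a::semigroup_mult) rel \<Rightarrow> bool" where
  "idem_classes_completely_simple \<rho> \<longleftrightarrow>
     (\<forall>A\<in>quot \<rho>. qmult \<rho> A A = A \<longrightarrow> completely_simple_on A (*))"

definition is_arrow :: "('a::semigroup_mult) rel \<Rightarrow> 'a set \<Rightarrow> 'a \<Rightarrow> 'a set \<Rightarrow> bool" where
  "is_arrow \<rho> \<alpha> s \<beta> \<longleftrightarrow> \<alpha> \<in> quot \<rho> \<and> \<beta> \<in> quot \<rho> \<and>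
     qmult \<rho> \<alpha> (cls \<rho> s) = \<beta> \<and> qmult \<rho> \<beta> (qinv \<rho> (cls \<rho> s)) = \<alpha>"

end

theory Submission
  imports Defs
begin

locale isg =
  fixes A :: "'b set" and f :: "'b \<Rightarrow> 'b \<Rightarrow> 'b" (infixl \<open>\<cdot>\<close> 70)
  assumes cl[simp]: "a \<in> A \<Longrightarrow> b \<in> A \<Longrightarrow> a \<cdot> b \<in> A"
    and assoc[simp]: "a \<in> A \<Longrightarrow> b \<in> A \<Longrightarrow> c \<in> A \<Longrightarrow> a \<cdot> b \<cdot> c = a \<cdot> (b \<cdot> c)"
    and uniq: "a \<in> A \<Longrightarrow> \<exists>!x. is_inv A f a x"
begin

abbreviation i where "i \<equiv> inv_on A f"

lemma inv_props: "a \<in> A \<Longrightarrow> is_inv A f a (i a)"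
  unfolding inv_on_def by (rule theI') (rule uniq)

lemma inv_in[simp]: "a \<in> A \<Longrightarrow> i a \<in> A"
  using inv_props[of a] unfolding is_inv_def by simp

lemma inv1[simp]: "a \<in> A \<Longrightarrow> a \<cdot> (i a \<cdot> a) = a"
  using inv_props[of a] unfolding is_inv_def by simp

lemma inv2[simp]: "a \<in> A \<Longrightarrow> i a \<cdot> (a \<cdot> i a) = i a"
  using inv_props[of a] unfolding is_inv_def by simp

lemma inv1'[simp]: "a \<in> A \<Longrightarrow> z \<in> A \<Longrightarrow> a \<cdot> (i a \<cdot> (a \<cdot> z)) = a \<cdot> z"
  by (metis assoc cl inv1 inv_in)

lemma inv2'[simp]: "a \<in> A \<Longrightarrow> z \<in> A \<Longrightarrow> i a \<cdot> (a \<cdot> (i a \<cdot> z)) = i a \<cdot> z"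
  by (metis assoc cl inv2 inv_in)

lemma inv_uniq: "a \<in> A \<Longrightarrow> x \<in> A \<Longrightarrow> a \<cdot> (x \<cdot> a) = a \<Longrightarrow> x \<cdot> (a \<cdot> x) = x \<Longrightarrow> x = i a"
proof -
  assume a: "a \<in> A" and x: "x \<in> A" and h1: "a \<cdot> (x \<cdot> a) = a" and h2: "x \<cdot> (a \<cdot> x) = x"
  have h: "is_inv A f a x" unfolding is_inv_def using a x h1 h2 by simp
  show "x = i a" unfolding inv_on_def by (rule the1_equality[symmetric, OF uniq[OF a] h])
qed

lemma inv_inv[simp]: "a \<in> A \<Longrightarrow> i (i a) = a"
  by (rule inv_uniq[symmetric]) auto

lemma inv_idem: "e \<in> A \<Longrightarrow> e \<cdot> e = e \<Longrightarrow> i e = e"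
  by (rule inv_uniq[symmetric]) auto

lemma idem_prod:
  assumes e: "e \<in> A" "e \<cdot> e = e" and g: "g \<in> A" "g \<cdot> g = g"
  shows "e \<cdot> (g \<cdot> (e \<cdot> g)) = e \<cdot> g"
proof -
  define x where "x = i (e \<cdot> g)"
  have xA: "x \<in> A" using e g x_def by simp
  have ee: "e \<cdot> (e \<cdot> z) = e \<cdot> z" if "z \<in> A" for z using e that by (metis assoc)
  have gg: "g \<cdot> (g \<cdot> z) = g \<cdot> z" if "z \<in> A" for z using g that by (metis assoc)
  have x1r: "(e \<cdot> g) \<cdot> (x \<cdot> (e \<cdot> g)) = e \<cdot> g" unfolding x_def by (rule inv1) (use e g in simp)
  have x1: "e \<cdot> (g \<cdot> (x \<cdot> (e \<cdot> g))) = e \<cdot> g" using x1r e g xA by (metis assoc cl)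
  have x2r: "x \<cdot> ((e \<cdot> g) \<cdot> x) = x" unfolding x_def by (rule inv2) (use e g in simp)
  have x2: "x \<cdot> (e \<cdot> (g \<cdot> x)) = x" using x2r e g xA by (metis assoc cl)
  have x2': "x \<cdot> (e \<cdot> (g \<cdot> (x \<cdot> z))) = x \<cdot> z" if "z \<in> A" for z
    using x2 that e g xA by (metis assoc cl)
  have y0: "g \<cdot> (x \<cdot> e) = i (e \<cdot> g)"
  proof (rule inv_uniq)
    show "e \<cdot> g \<in> A" "g \<cdot> (x \<cdot> e) \<in> A" using e g xA by auto
    show "e \<cdot> g \<cdot> (g \<cdot> (x \<cdot> e) \<cdot> (e \<cdot> g)) = e \<cdot> g"
      using e g xA x1 by (simp add: ee gg e(2))
    show "g \<cdot> (x \<cdot> e) \<cdot> (e \<cdot> g \<cdot> (g \<cdot> (x \<cdot> e))) = g \<cdot> (x \<cdot> e)"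
      using e g xA x2' by (simp add: ee gg)
  qed
  have y: "g \<cdot> (x \<cdot> e) = x" using y0 x_def by simp
  have xx: "x \<cdot> x = x"
  proof -
    have "x \<cdot> x = g \<cdot> (x \<cdot> e) \<cdot> (g \<cdot> (x \<cdot> e))" using y by simp
    also have "\<dots> = g \<cdot> (x \<cdot> (e \<cdot> (g \<cdot> (x \<cdot> e))))" using e g xA by simp
    also have "\<dots> = g \<cdot> (x \<cdot> e)" using x2' e by simp
    finally show ?thesis using y by simp
  qed
  have egx: "e \<cdot> g = x"
    using inv_idem[OF xA xx] x_def e g by (metis cl inv_inv)
  show ?thesis using egx xx e g by (metis assoc cl)
qed

lemma idem_comm:
  assumes e: "e \<in> A" "e \<cdot> e = e" and g: "g \<in> A" "g \<cdot> g = g"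
  shows "e \<cdot> g = g \<cdot> e"
proof -
  have ee: "e \<cdot> (e \<cdot> z) = e \<cdot> z" if "z \<in> A" for z using e that by (metis assoc)
  have gg: "g \<cdot> (g \<cdot> z) = g \<cdot> z" if "z \<in> A" for z using g that by (metis assoc)
  have eg2: "e \<cdot> (g \<cdot> (e \<cdot> g)) = e \<cdot> g" by (rule idem_prod[OF e g])
  have ge2: "g \<cdot> (e \<cdot> (g \<cdot> e)) = g \<cdot> e" by (rule idem_prod[OF g e])
  have 1: "g \<cdot> e = i (e \<cdot> g)"
  proof (rule inv_uniq)
    show "e \<cdot> g \<in> A" "g \<cdot> e \<in> A" using e g by auto
    show "e \<cdot> g \<cdot> (g \<cdot> e \<cdot> (e \<cdot> g)) = e \<cdot> g" using e g eg2 by (simp add: ee gg e(2))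
    show "g \<cdot> e \<cdot> (e \<cdot> g \<cdot> (g \<cdot> e)) = g \<cdot> e" using e g ge2 by (simp add: ee gg g(2))
  qed
  have 2: "i (e \<cdot> g) = e \<cdot> g" by (rule inv_idem) (use e g eg2 in \<open>simp_all\<close>)
  show ?thesis using 1 2 by simp
qed

lemma inv_mult: "a \<in> A \<Longrightarrow> b \<in> A \<Longrightarrow> i (a \<cdot> b) = i b \<cdot> i a"
proof (rule inv_uniq[symmetric])
  assume a: "a \<in> A" and b: "b \<in> A"
  have c: "b \<cdot> i b \<cdot> (i a \<cdot> a) = i a \<cdot> a \<cdot> (b \<cdot> i b)"
    by (rule idem_comm) (use a b in simp_all)
  show "a \<cdot> b \<in> A" "i b \<cdot> i a \<in> A" using a b by auto
  have "a \<cdot> b \<cdot> (i b \<cdot> i a \<cdot> (a \<cdot> b)) = a \<cdot> (b \<cdot> i b \<cdot> (i a \<cdot> a)) \<cdot> b" using a b by simp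
  also have "\<dots> = a \<cdot> b" unfolding c using a b by simp
  finally show "a \<cdot> b \<cdot> (i b \<cdot> i a \<cdot> (a \<cdot> b)) = a \<cdot> b" .
  have "i b \<cdot> i a \<cdot> (a \<cdot> b \<cdot> (i b \<cdot> i a)) = i b \<cdot> (i a \<cdot> a \<cdot> (b \<cdot> i b)) \<cdot> i a" using a b by simp
  also have "\<dots> = i b \<cdot> i a" unfolding c[symmetric] using a b by simp
  finally show "i b \<cdot> i a \<cdot> (a \<cdot> b \<cdot> (i b \<cdot> i a)) = i b \<cdot> i a" .
qed

lemma R1: "a \<in> A \<Longrightarrow> b \<in> A \<Longrightarrow> a = b \<or> (\<exists>y\<in>A. a = b \<cdot> y) \<Longrightarrow> a = b \<cdot> (i b \<cdot> a)"
  by auto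

lemma L1:
  assumes e: "e \<in> A" "e \<cdot> e = e" and x: "x \<in> A" and y: "y = e \<cdot> x"
  shows "y = y \<cdot> (i y \<cdot> x)" and "i y = i y \<cdot> (y \<cdot> i x)"
proof -
  have iy: "i (e \<cdot> x) = i x \<cdot> e" using inv_mult[of e x] inv_idem[OF e] e x by simp
  have c: "e \<cdot> (x \<cdot> i x) = x \<cdot> i x \<cdot> e" by (rule idem_comm) (use e x in simp_all)
  have ee: "e \<cdot> (e \<cdot> z) = e \<cdot> z" if "z \<in> A" for z using e that by (metis assoc)
  have "e \<cdot> x \<cdot> (i (e \<cdot> x) \<cdot> x) = e \<cdot> (x \<cdot> i x \<cdot> e) \<cdot> x" unfolding iy using e x by simp
  also have "\<dots> = e \<cdot> (e \<cdot> (x \<cdot> i x)) \<cdot> x" unfolding c[symmetric] using e x by simp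
  also have "\<dots> = e \<cdot> x" using e x by (simp add: ee)
  finally show "y = y \<cdot> (i y \<cdot> x)" using y by simp
  have "i (e \<cdot> x) \<cdot> (e \<cdot> x \<cdot> i x) = i x \<cdot> (e \<cdot> (x \<cdot> i x))" unfolding iy using e x by (simp add: ee)
  also have "\<dots> = i x \<cdot> e" unfolding c using e x by simp
  finally show "i y = i y \<cdot> (y \<cdot> i x)" using iy y by simp
qed

lemma main:
  assumes a: "\<alpha> \<in> A" and b: "\<beta> \<in> A" and x: "x \<in> A"
  shows "((\<alpha> \<cdot> x = \<beta> \<and> \<beta> \<cdot> i x = \<alpha>) \<longleftrightarrow>
            greenR A f \<alpha> \<beta> \<and> nat_le A f (i \<alpha> \<cdot> \<beta>) x)
       \<and> ((\<alpha> \<cdot> x = \<beta> \<and> \<beta> \<cdot> i x = \<alpha>) \<longrightarrow>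
            nat_le A f (i \<alpha> \<cdot> \<alpha>) (x \<cdot> i x) \<and> nat_le A f (i \<beta> \<cdot> \<beta>) (i x \<cdot> x))
       \<and> ((\<alpha> \<cdot> x = \<beta> \<and> \<beta> \<cdot> i x = \<alpha>) \<longrightarrow>
            ((x = i \<alpha> \<cdot> \<beta> \<longleftrightarrow> x \<cdot> i x = i \<alpha> \<cdot> \<alpha>) \<and>
             (x \<cdot> i x = i \<alpha> \<cdot> \<alpha> \<longleftrightarrow> i x \<cdot> x = i \<beta> \<cdot> \<beta>)))"
proof -
  let ?arr = "\<alpha> \<cdot> x = \<beta> \<and> \<beta> \<cdot> i x = \<alpha>"
  have P1: "greenR A f \<alpha> \<beta> \<and> nat_le A f (i \<alpha> \<cdot> \<beta>) x" if h1: "\<alpha> \<cdot> x = \<beta>" and h2: "\<beta> \<cdot> i x = \<alpha>"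
  proof
    show "greenR A f \<alpha> \<beta>" unfolding greenR_def using h1 h2 a b x by (metis inv_in)
    show "nat_le A f (i \<alpha> \<cdot> \<beta>) x" unfolding nat_le_def
      by (rule bexI[of _ "i \<alpha> \<cdot> \<alpha>"]) (use a x h1[symmetric] in simp_all)
  qed
  have P2: "?arr" if g: "greenR A f \<alpha> \<beta>" and n: "nat_le A f (i \<alpha> \<cdot> \<beta>) x"
  proof -
    from n obtain e where e: "e \<in> A" "e \<cdot> e = e" and y: "i \<alpha> \<cdot> \<beta> = e \<cdot> x"
      unfolding nat_le_def by blast
    have ra: "\<alpha> = \<beta> \<cdot> (i \<beta> \<cdot> \<alpha>)" using g a b R1 unfolding greenR_def by blast
    have rb: "\<beta> = \<alpha> \<cdot> (i \<alpha> \<cdot> \<beta>)" using g a b R1 unfolding greenR_def by blast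
    note l = L1[OF e x y]
    have iy: "i (i \<alpha> \<cdot> \<beta>) = i \<beta> \<cdot> \<alpha>" using a b inv_mult[of "i \<alpha>" \<beta>] by simp
    have yy: "i \<alpha> \<cdot> \<beta> \<cdot> (i \<beta> \<cdot> \<alpha>) = i \<alpha> \<cdot> \<alpha>" using a b by (simp add: ra[symmetric])
    have "i \<alpha> \<cdot> \<beta> = i \<alpha> \<cdot> \<beta> \<cdot> (i \<beta> \<cdot> \<alpha> \<cdot> x)" using l(1)[unfolded iy] .
    also have "\<dots> = i \<alpha> \<cdot> \<beta> \<cdot> (i \<beta> \<cdot> \<alpha>) \<cdot> x" using a b x by simp
    also have "\<dots> = i \<alpha> \<cdot> \<alpha> \<cdot> x" by (simp only: yy)
    finally have s1: "i \<alpha> \<cdot> \<beta> = i \<alpha> \<cdot> \<alpha> \<cdot> x" .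
    have "\<beta> = \<alpha> \<cdot> (i \<alpha> \<cdot> \<alpha> \<cdot> x)" using rb unfolding s1 .
    also have "\<dots> = \<alpha> \<cdot> x" using a x by simp
    finally have 1: "\<alpha> \<cdot> x = \<beta>" by simp
    have yy2: "i \<beta> \<cdot> \<alpha> \<cdot> (i \<alpha> \<cdot> \<beta>) = i \<beta> \<cdot> \<beta>" using a b by (simp add: rb[symmetric])
    have "i \<beta> \<cdot> \<alpha> = i \<beta> \<cdot> \<alpha> \<cdot> (i \<alpha> \<cdot> \<beta> \<cdot> i x)" using l(2)[unfolded iy] .
    also have "\<dots> = i \<beta> \<cdot> \<alpha> \<cdot> (i \<alpha> \<cdot> \<beta>) \<cdot> i x" using a b x by simp
    also have "\<dots> = i \<beta> \<cdot> \<beta> \<cdot> i x" by (simp only: yy2)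
    finally have s2: "i \<beta> \<cdot> \<alpha> = i \<beta> \<cdot> \<beta> \<cdot> i x" .
    have "\<alpha> = \<beta> \<cdot> (i \<beta> \<cdot> \<beta> \<cdot> i x)" using ra unfolding s2 .
    also have "\<dots> = \<beta> \<cdot> i x" using b x by simp
    finally have 2: "\<beta> \<cdot> i x = \<alpha>" by simp
    show ?thesis using 1 2 by simp
  qed
  have P3: "nat_le A f (i \<alpha> \<cdot> \<alpha>) (x \<cdot> i x) \<and> nat_le A f (i \<beta> \<cdot> \<beta>) (i x \<cdot> x)"
    if h1: "\<alpha> \<cdot> x = \<beta>" and h2: "\<beta> \<cdot> i x = \<alpha>"
  proof
    have "\<alpha> \<cdot> x \<cdot> i x = \<alpha>" using h1 h2 by simp
    hence q: "\<alpha> \<cdot> (x \<cdot> i x) = \<alpha>" using a x by simp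
    show "nat_le A f (i \<alpha> \<cdot> \<alpha>) (x \<cdot> i x)" unfolding nat_le_def
      by (intro bexI[of _ "i \<alpha> \<cdot> \<alpha>"]) (use a x q in simp_all)
    have "\<beta> \<cdot> i x \<cdot> x = \<beta>" using h1 h2 by simp
    hence q2: "\<beta> \<cdot> (i x \<cdot> x) = \<beta>" using b x by simp
    show "nat_le A f (i \<beta> \<cdot> \<beta>) (i x \<cdot> x)" unfolding nat_le_def
      by (intro bexI[of _ "i \<beta> \<cdot> \<beta>"]) (use b x q2 in simp_all)
  qed
  have P4: "(x = i \<alpha> \<cdot> \<beta> \<longleftrightarrow> x \<cdot> i x = i \<alpha> \<cdot> \<alpha>) \<and> (x \<cdot> i x = i \<alpha> \<cdot> \<alpha> \<longleftrightarrow> i x \<cdot> x = i \<beta> \<cdot> \<beta>)"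
    if h1: "\<alpha> \<cdot> x = \<beta>" and h2: "\<beta> \<cdot> i x = \<alpha>"
  proof -
    have ra: "\<beta> \<cdot> (i \<beta> \<cdot> \<alpha>) = \<alpha>" unfolding h2[symmetric] using b x by simp
    have rb: "\<alpha> \<cdot> (i \<alpha> \<cdot> \<beta>) = \<beta>" unfolding h1[symmetric] using a x by simp
    have iy: "i (i \<alpha> \<cdot> \<beta>) = i \<beta> \<cdot> \<alpha>" using a b inv_mult[of "i \<alpha>" \<beta>] by simp
    have PQ: "x \<cdot> i x = i \<alpha> \<cdot> \<alpha>" if "x = i \<alpha> \<cdot> \<beta>"
      using that iy a b by (simp add: ra)
    have PR: "i x \<cdot> x = i \<beta> \<cdot> \<beta>" if "x = i \<alpha> \<cdot> \<beta>"
      using that iy a b by (simp add: rb)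
    have QP: "x = i \<alpha> \<cdot> \<beta>" if q: "x \<cdot> i x = i \<alpha> \<cdot> \<alpha>"
    proof -
      have "x = x \<cdot> i x \<cdot> x" using x by simp
      also have "\<dots> = i \<alpha> \<cdot> \<alpha> \<cdot> x" by (simp only: q)
      also have "\<dots> = i \<alpha> \<cdot> \<beta>" using a x h1 by simp
      finally show ?thesis .
    qed
    have ixb: "i (\<beta> \<cdot> i x) = x \<cdot> i \<beta>" using b x inv_mult[of \<beta> "i x"] by simp
    have RP: "x = i \<alpha> \<cdot> \<beta>" if q: "i x \<cdot> x = i \<beta> \<cdot> \<beta>"
    proof -
      have "x = x \<cdot> (i x \<cdot> x)" using x by simp
      also have "\<dots> = x \<cdot> (i \<beta> \<cdot> \<beta>)" by (simp only: q)
      also have "\<dots> = x \<cdot> i \<beta> \<cdot> \<beta>" using x b by simp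
      also have "\<dots> = i (\<beta> \<cdot> i x) \<cdot> \<beta>" by (simp only: ixb)
      also have "\<dots> = i \<alpha> \<cdot> \<beta>" by (simp only: h2)
      finally show ?thesis .
    qed
    show ?thesis using PQ PR QP RP by blast
  qed
  show ?thesis using P1 P2 P3 P4 by blast
qed

end

lemma cls_in: "congruence \<rho> \<Longrightarrow> cls \<rho> a \<in> quot \<rho>"
  unfolding cls_def quot_def by (auto intro: quotientI)

lemma quot_cls: "A \<in> quot \<rho> \<Longrightarrow> \<exists>a. A = cls \<rho> a"
  unfolding cls_def quot_def by (auto elim: quotientE)

lemma qmult_cls:
  assumes c: "congruence \<rho>"
  shows "qmult \<rho> (cls \<rho> a) (cls \<rho> b) = cls \<rho> (a * b)"
proof -
  have eq: "equiv UNIV \<rho>" using c unfolding congruence_def by blast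
  have ra: "(a, SOME a'. a' \<in> cls \<rho> a) \<in> \<rho>"
    using someI[of "\<lambda>a'. a' \<in> cls \<rho> a" a] equiv_class_self[OF eq, of a] unfolding cls_def by simp
  have rb: "(b, SOME b'. b' \<in> cls \<rho> b) \<in> \<rho>"
    using someI[of "\<lambda>a'. a' \<in> cls \<rho> b" b] equiv_class_self[OF eq, of b] unfolding cls_def by simp
  have "(a * b, (SOME a'. a' \<in> cls \<rho> a) * b) \<in> \<rho>" using c ra unfolding congruence_def by blast
  moreover have "((SOME a'. a' \<in> cls \<rho> a) * b, (SOME a'. a' \<in> cls \<rho> a) * (SOME b'. b' \<in> cls \<rho> b)) \<in> \<rho>"
    using c rb unfolding congruence_def by blast
  ultimately have "(a * b, (SOME a'. a' \<in> cls \<rho> a) * (SOME b'. b' \<in> cls \<rho> b)) \<in> \<rho>"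
    using eq unfolding equiv_def by (meson transE)
  then show ?thesis unfolding qmult_def cls_def using eq
    by (metis equiv_class_eq)
qed

lemma quot_isg:
  assumes "inverse_congruence \<rho>"
  shows "isg (quot \<rho>) (qmult \<rho>)"
proof -
  have c: "congruence \<rho>" and inv: "inverse_semigroup_on (quot \<rho>) (qmult \<rho>)"
    using assms unfolding inverse_congruence_def by auto
  show ?thesis
  proof
    fix a b assume "a \<in> quot \<rho>" "b \<in> quot \<rho>"
    then show "qmult \<rho> a b \<in> quot \<rho>" using inv unfolding inverse_semigroup_on_def closed_on_def by blast
  next
    fix a b d assume "a \<in> quot \<rho>" "b \<in> quot \<rho>" "d \<in> quot \<rho>"
    then obtain x y z where "a = cls \<rho> x" "b = cls \<rho> y" "d = cls \<rho> z" using quot_cls by metis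
    then show "qmult \<rho> (qmult \<rho> a b) d = qmult \<rho> a (qmult \<rho> b d)"
      using c by (simp add: qmult_cls mult.assoc)
  next
    fix a assume "a \<in> quot \<rho>"
    then show "\<exists>!x. is_inv (quot \<rho>) (qmult \<rho>) a x" using inv unfolding inverse_semigroup_on_def by blast
  qed
qed

theorem lemma5p1:
  fixes \<rho> :: "('a::semigroup_mult) rel" and \<alpha> \<beta> :: "'a set" and s :: 'a
  assumes "E_solid TYPE('a)" and "locally_inverse TYPE('a)"
    and "inverse_congruence \<rho>" and "idem_classes_completely_simple \<rho>"
    and "\<alpha> \<in> quot \<rho>" and "\<beta> \<in> quot \<rho>"
  shows "(is_arrow \<rho> \<alpha> s \<beta> \<longleftrightarrow>
            greenR (quot \<rho>) (qmult \<rho>) \<alpha> \<beta> \<and>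
            nat_le (quot \<rho>) (qmult \<rho>) (qmult \<rho> (qinv \<rho> \<alpha>) \<beta>) (cls \<rho> s))
       \<and> (is_arrow \<rho> \<alpha> s \<beta> \<longrightarrow>
            nat_le (quot \<rho>) (qmult \<rho>) (qmult \<rho> (qinv \<rho> \<alpha>) \<alpha>)
                   (qmult \<rho> (cls \<rho> s) (qinv \<rho> (cls \<rho> s))) \<and>
            nat_le (quot \<rho>) (qmult \<rho>) (qmult \<rho> (qinv \<rho> \<beta>) \<beta>)
                   (qmult \<rho> (qinv \<rho> (cls \<rho> s)) (cls \<rho> s)))
       \<and> (is_arrow \<rho> \<alpha> s \<beta> \<longrightarrow>
            ((cls \<rho> s = qmult \<rho> (qinv \<rho> \<alpha>) \<beta> \<longleftrightarrow>
              qmult \<rho> (cls \<rho> s) (qinv \<rho> (cls \<rho> s)) = qmult \<rho> (qinv \<rho> \<alpha>) \<alpha>) \<and>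
             (qmult \<rho> (cls \<rho> s) (qinv \<rho> (cls \<rho> s)) = qmult \<rho> (qinv \<rho> \<alpha>) \<alpha> \<longleftrightarrow>
              qmult \<rho> (qinv \<rho> (cls \<rho> s)) (cls \<rho> s) = qmult \<rho> (qinv \<rho> \<beta>) \<beta>)))"
proof -
  have c: "congruence \<rho>" using assms(3) unfolding inverse_congruence_def by blast
  interpret isg "quot \<rho>" "qmult \<rho>" by (rule quot_isg[OF assms(3)])
  have q: "qinv \<rho> = inv_on (quot \<rho>) (qmult \<rho>)" unfolding qinv_def by (rule ext) simp
  have e: "is_arrow \<rho> \<alpha> s \<beta> \<longleftrightarrow> (qmult \<rho> \<alpha> (cls \<rho> s) = \<beta> \<and>
      qmult \<rho> \<beta> (inv_on (quot \<rho>) (qmult \<rho>) (cls \<rho> s)) = \<alpha>)"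
    unfolding is_arrow_def q using assms(5,6) by blast
  show ?thesis unfolding e q by (rule main[OF assms(5) assms(6) cls_in[OF c, of s]])
qed

end
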